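(* Let $\mathcal{X}\subseteq\mathbb{R}^d$ be a nonempty closed convex set and let $F\colon\mathcal{X}\to\mathbb{R}^d$ be monotone and $\beta$-smooth with respect to the $\ell_2$-norm. Consider the deterministic setting, i.e. $\widehat{F(x)}=F(x)$ for all queried points. Run Algorithm AdaPEG-Unbounded (described in the context) with parameters $\gamma_0>0$, $\eta>0$, and let $\bar x_T$ be its output. Let $D>0$ be any fixed value. Then \[\mathrm{Err}_D(\bar x_T)\le\frac1T\left(\frac{1}{2\gamma_0}\frac{D^4}{\eta^2}\beta^2+\frac{\gamma_0}{2}D^2+\frac{8}{\gamma_0}\beta^2\eta^2+\frac1{\gamma_0}\|F(x_\tau)-F(x_{\tau-1})\|^2+\frac1{\gamma_0}\|F(x_{\tau-1})-F(x_{\tau-2})\|^2\right),\] where $\tau$ is the last iteration $t$ such that $\gamma_{t-2}\le2\sqrt2\beta$. In particular, setting $\eta=\Theta(D)$ and $\gamma_0=1$, \[\mathrm{Err}_D(\bar x_T)\le O\left(\frac{\beta^2D^2+\|F(x_\tau)-F(x_{\tau-1})\|^2+\|F(x_{\tau-1})-F(x_{\tau-2})\|^2}{T}\right).\]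
   Context: $\|\cdot\|$ is the Euclidean norm. Monotone: $\langle F(x)-F(y),x-y\rangle\ge0$; $\beta$-smooth: $\|F(x)-F(y)\|\le\beta\|x-y\|$. $\mathrm{Err}_D(x)=\sup\{\langle F(y),x-y\rangle: y\in\mathcal{X},\ \|y-x_0\|\le D\}$ with $x_0$ the initial point. Algorithm AdaPEG-Unbounded: $x_0=z_0\in\mathcal{X}$, $\gamma_{-1}=0$. For $t=1,\dots,T$: $x_t=\arg\min_{u\in\mathcal{X}}\{\langle F(x_{t-1}),u\rangle+\tfrac12\gamma_{t-2}\|u-z_{t-1}\|^2+\tfrac12(\gamma_{t-1}-\gamma_{t-2})\|u-x_0\|^2\}$; $z_t=\arg\min_{u\in\mathcal{X}}\{\langle F(x_t),u\rangle+\tfrac12\gamma_{t-2}\|u-z_{t-1}\|^2+\tfrac12(\gamma_{t-1}-\gamma_{t-2})\|u-x_0\|^2\}$; $\gamma_t=\frac1\eta\sqrt{\eta^2\gamma_0^2+\sum_{s=1}^t\|F(x_s)-F(x_{s-1})\|^2}$. Output $\bar x_T=\frac1T\sum_{t=1}^Tx_t$. *)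

theory Defs
  imports "HOL-Analysis.Analysis"
begin

definition monotone_op :: "'a::real_inner set \<Rightarrow> ('a \<Rightarrow> 'a) \<Rightarrow> bool" where
  "monotone_op X F \<longleftrightarrow> (\<forall>x\<in>X. \<forall>y\<in>X. inner (F x - F y) (x - y) \<ge> 0)"

definition smooth_op :: "'a::real_normed_vector set \<Rightarrow> real \<Rightarrow> ('a \<Rightarrow> 'a) \<Rightarrow> bool" where
  "smooth_op X \<beta> F \<longleftrightarrow> (\<forall>x\<in>X. \<forall>y\<in>X. norm (F x - F y) \<le> \<beta> * norm (x - y))"

definition Err :: "'a::real_inner set \<Rightarrow> ('a \<Rightarrow> 'a) \<Rightarrow> 'a \<Rightarrow> real \<Rightarrow> 'a \<Rightarrow> real" where
  "Err X F x0 D x = (SUP y\<in>{y\<in>X. norm (y - x0) \<le> D}. inner (F y) (x - y))"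

text \<open>Step sizes gamma_t, indexed by integers so that gamma_{-1} = 0.
  For t >= 0: gamma_t = (1/eta) * sqrt(eta^2 gamma0^2 + sum_{s=1..t} norm(F(x_s) - F(x_{s-1}))^2).\<close>
definition gam :: "real \<Rightarrow> real \<Rightarrow> ('a::real_normed_vector \<Rightarrow> 'a) \<Rightarrow> (nat \<Rightarrow> 'a) \<Rightarrow> int \<Rightarrow> real" where
  "gam \<eta> \<gamma>0 F x t = (if t < 0 then 0 else
     (1 / \<eta>) * sqrt (\<eta>\<^sup>2 * \<gamma>0\<^sup>2 + (\<Sum>s\<in>{1..nat t}. (norm (F (x s) - F (x (s - 1))))\<^sup>2)))"

definition prox_obj :: "'a::real_inner \<Rightarrow> real \<Rightarrow> 'a \<Rightarrow> real \<Rightarrow> 'a \<Rightarrow> 'a \<Rightarrow> real" where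
  "prox_obj g a z b x0 u = inner g u + a / 2 * (norm (u - z))\<^sup>2 + b / 2 * (norm (u - x0))\<^sup>2"

definition is_argmin_on :: "'a set \<Rightarrow> ('a \<Rightarrow> real) \<Rightarrow> 'a \<Rightarrow> bool" where
  "is_argmin_on X f u \<longleftrightarrow> u \<in> X \<and> (\<forall>v\<in>X. f u \<le> f v)"

end

theory Submission
  imports Defs
begin

lemma norm_add_sq: "(norm (p + q))\<^sup>2 = (norm p)\<^sup>2 + 2 * inner p q + (norm (q::'a::real_inner))\<^sup>2"
  by (simp add: power2_norm_eq_inner inner_add inner_commute)

lemma three_point: "2 * inner (a - b) (c - a) = (norm (c - b))\<^sup>2 - (norm (a - b))\<^sup>2 - (norm (c - (a::'a::real_inner)))\<^sup>2"
proof -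
  have "c - b = (c - a) + (a - b)" by simp
  then have "(norm (c - b))\<^sup>2 = (norm (c - a))\<^sup>2 + 2 * inner (c - a) (a - b) + (norm (a - b))\<^sup>2"
    by (metis norm_add_sq)
  then show ?thesis by (simp add: inner_commute)
qed

lemma prox_expand:
  "prox_obj g a z b x0 (u + s *\<^sub>R h) - prox_obj g a z b x0 u
   = s * inner (g + a *\<^sub>R (u - z) + b *\<^sub>R (u - x0)) h + s\<^sup>2 * (a + b) / 2 * (norm h)\<^sup>2"
proof -
  have e1: "(norm (u + s *\<^sub>R h - z))\<^sup>2 = (norm (u - z))\<^sup>2 + 2 * s * inner (u - z) h + s\<^sup>2 * (norm h)\<^sup>2"
    using norm_add_sq[of "u - z" "s *\<^sub>R h"] by (simp add: algebra_simps power2_eq_square)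
  have e2: "(norm (u + s *\<^sub>R h - x0))\<^sup>2 = (norm (u - x0))\<^sup>2 + 2 * s * inner (u - x0) h + s\<^sup>2 * (norm h)\<^sup>2"
    using norm_add_sq[of "u - x0" "s *\<^sub>R h"] by (simp add: algebra_simps power2_eq_square)
  show ?thesis unfolding prox_obj_def e1 e2
    by (simp add: inner_add_left inner_add_right algebra_simps)
qed

lemma nonneg_from_small:
  fixes L K :: real
  assumes K: "K \<ge> 0" and h: "\<And>s. 0 < s \<Longrightarrow> s \<le> 1 \<Longrightarrow> L \<ge> - s * K"
  shows "L \<ge> 0"
proof (rule ccontr)
  assume "\<not> L \<ge> 0"
  then have L: "L < 0" by simp
  show False
  proof (cases "K = 0")
    case True then show ?thesis using h[of 1] L by simp
  next
    case False
    define s where "s = min 1 (- L / (2 * K))"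
    have "K > 0" using K False by simp
    then have s0: "0 < s" using L by (simp add: s_def divide_neg_pos)
    have s1: "s \<le> 1" by (simp add: s_def)
    have "s * K \<le> (- L / (2 * K)) * K" using K by (intro mult_right_mono) (auto simp: s_def)
    also have "\<dots> = - L / 2" using False by (simp add: field_simps)
    finally show False using h[OF s0 s1] L by linarith
  qed
qed

lemma prox_foc:
  assumes cvx: "convex X" and am: "is_argmin_on X (prox_obj g a z b x0) u" and v: "v \<in> X"
    and ab: "a + b \<ge> 0"
  shows "0 \<le> inner (g + a *\<^sub>R (u - z) + b *\<^sub>R (u - x0)) (v - u)"
proof -
  let ?L = "inner (g + a *\<^sub>R (u - z) + b *\<^sub>R (u - x0)) (v - u)"
  have uX: "u \<in> X" using am by (simp add: is_argmin_on_def)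
  show ?thesis
  proof (rule nonneg_from_small[where K = "(a + b) / 2 * (norm (v - u))\<^sup>2"])
    show "0 \<le> (a + b) / 2 * (norm (v - u))\<^sup>2" using ab by simp
    fix s :: real assume s0: "0 < s" and s1: "s \<le> 1"
    have "u + s *\<^sub>R (v - u) = (1 - s) *\<^sub>R u + s *\<^sub>R v" by (simp add: algebra_simps)
    also have "\<dots> \<in> X" using cvx uX v s0 s1 by (simp add: convex_def)
    finally have wX: "u + s *\<^sub>R (v - u) \<in> X" .
    have "0 \<le> prox_obj g a z b x0 (u + s *\<^sub>R (v - u)) - prox_obj g a z b x0 u"
      using am wX by (simp add: is_argmin_on_def)
    also have "\<dots> = s * ?L + s\<^sup>2 * (a + b) / 2 * (norm (v - u))\<^sup>2" by (rule prox_expand)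
    finally have "0 \<le> s * (?L + s * ((a + b) / 2 * (norm (v - u))\<^sup>2))"
      by (simp add: algebra_simps power2_eq_square)
    then have "0 \<le> ?L + s * ((a + b) / 2 * (norm (v - u))\<^sup>2)" using s0
      by (simp add: zero_le_mult_iff)
    then show "- s * ((a + b) / 2 * (norm (v - u))\<^sup>2) \<le> ?L" by simp
  qed
qed

lemma step_ineq:
  fixes g1 g2 x z zp x0 y :: "'a::real_inner" and A B :: real
  assumes hx: "0 \<le> inner (g1 + A *\<^sub>R (x - zp) + B *\<^sub>R (x - x0)) (z - x)"
    and hz: "0 \<le> inner (g2 + A *\<^sub>R (z - zp) + B *\<^sub>R (z - x0)) (y - z)"
  shows "inner g2 (x - y) \<le> A / 2 * (norm (y - zp))\<^sup>2 - (A + B) / 2 * (norm (y - z))\<^sup>2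
     + B / 2 * (norm (y - x0))\<^sup>2 - (A + B) / 2 * (norm (z - x))\<^sup>2 - A / 2 * (norm (x - zp))\<^sup>2
     - B / 2 * (norm (x - x0))\<^sup>2 + inner (g2 - g1) (x - z)"
proof -
  have t1: "2 * inner (z - zp) (y - z) = (norm (y - zp))\<^sup>2 - (norm (z - zp))\<^sup>2 - (norm (y - z))\<^sup>2"
    by (rule three_point)
  have t2: "2 * inner (z - x0) (y - z) = (norm (y - x0))\<^sup>2 - (norm (z - x0))\<^sup>2 - (norm (y - z))\<^sup>2"
    by (rule three_point)
  have t3: "2 * inner (x - zp) (z - x) = (norm (z - zp))\<^sup>2 - (norm (x - zp))\<^sup>2 - (norm (z - x))\<^sup>2"
    by (rule three_point)
  have t4: "2 * inner (x - x0) (z - x) = (norm (z - x0))\<^sup>2 - (norm (x - x0))\<^sup>2 - (norm (z - x))\<^sup>2"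
    by (rule three_point)
  have hx': "0 \<le> inner g1 (z - x) + A * inner (x - zp) (z - x) + B * inner (x - x0) (z - x)"
    using hx by (simp add: inner_add_left)
  have hz': "0 \<le> inner g2 (y - z) + A * inner (z - zp) (y - z) + B * inner (z - x0) (y - z)"
    using hz by (simp add: inner_add_left)
  have i1: "inner g2 (x - y) = inner g2 (z - y) + inner g2 (x - z)"
    by (simp add: inner_diff_right)
  have i2: "inner (g2 - g1) (x - z) = inner g2 (x - z) + inner g1 (z - x)"
    by (simp add: inner_diff_right inner_diff_left)
  have i3: "inner g2 (z - y) = - inner g2 (y - z)" by (simp add: inner_diff_right)
  have a1: "A * inner (z - zp) (y - z) = A / 2 * (norm (y - zp))\<^sup>2 - A / 2 * (norm (z - zp))\<^sup>2 - A / 2 * (norm (y - z))\<^sup>2"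
    using arg_cong[OF t1, of "\<lambda>r. A / 2 * r"] by (simp add: right_diff_distrib)
  have a2: "B * inner (z - x0) (y - z) = B / 2 * (norm (y - x0))\<^sup>2 - B / 2 * (norm (z - x0))\<^sup>2 - B / 2 * (norm (y - z))\<^sup>2"
    using arg_cong[OF t2, of "\<lambda>r. B / 2 * r"] by (simp add: right_diff_distrib)
  have a3: "A * inner (x - zp) (z - x) = A / 2 * (norm (z - zp))\<^sup>2 - A / 2 * (norm (x - zp))\<^sup>2 - A / 2 * (norm (z - x))\<^sup>2"
    using arg_cong[OF t3, of "\<lambda>r. A / 2 * r"] by (simp add: right_diff_distrib)
  have a4: "B * inner (x - x0) (z - x) = B / 2 * (norm (z - x0))\<^sup>2 - B / 2 * (norm (x - x0))\<^sup>2 - B / 2 * (norm (z - x))\<^sup>2"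
    using arg_cong[OF t4, of "\<lambda>r. B / 2 * r"] by (simp add: right_diff_distrib)
  have a5: "(A + B) / 2 * (norm (y - z))\<^sup>2 = A / 2 * (norm (y - z))\<^sup>2 + B / 2 * (norm (y - z))\<^sup>2"
    by (simp add: algebra_simps)
  have a6: "(A + B) / 2 * (norm (z - x))\<^sup>2 = A / 2 * (norm (z - x))\<^sup>2 + B / 2 * (norm (z - x))\<^sup>2"
    by (simp add: algebra_simps)
  show ?thesis using hx' hz' i1 i2 i3 a1 a2 a3 a4 a5 a6 by linarith
qed

lemma prox_lip:
  fixes g1 g2 x z zp x0 :: "'a::real_inner" and A B :: real
  assumes hx: "0 \<le> inner (g1 + A *\<^sub>R (x - zp) + B *\<^sub>R (x - x0)) (z - x)"
    and hz: "0 \<le> inner (g2 + A *\<^sub>R (z - zp) + B *\<^sub>R (z - x0)) (x - z)"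
    and G: "A + B > 0"
  shows "inner (g2 - g1) (x - z) \<le> (norm (g2 - g1))\<^sup>2 / (A + B)"
proof -
  have e: "(A + B) * (norm (x - z))\<^sup>2 \<le> inner (g2 - g1) (x - z)"
  proof -
    define u1 where "u1 = g1 + A *\<^sub>R (x - zp) + B *\<^sub>R (x - x0)"
    define u2 where "u2 = g2 + A *\<^sub>R (z - zp) + B *\<^sub>R (z - x0)"
    have s1: "inner u1 (z - x) = - inner u1 (x - z)"
      by (metis inner_minus_right minus_diff_eq)
    have "0 \<le> inner u1 (z - x) + inner u2 (x - z)" using hx hz unfolding u1_def u2_def by simp
    also have "\<dots> = inner (u2 - u1) (x - z)" using s1 by (simp add: inner_diff_left)
    also have "u2 - u1 = (g2 - g1) - (A + B) *\<^sub>R (x - z)"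
      unfolding u1_def u2_def by (simp add: algebra_simps)
    also have "inner ((g2 - g1) - (A + B) *\<^sub>R (x - z)) (x - z) = inner (g2 - g1) (x - z) - (A + B) * inner (x - z) (x - z)"
      by (simp add: inner_diff_left)
    finally show ?thesis by (simp add: power2_norm_eq_inner)
  qed
  have cs: "inner (g2 - g1) (x - z) \<le> norm (g2 - g1) * norm (x - z)"
    by (rule Cauchy_Schwarz_ineq2[THEN abs_le_D1])
  show ?thesis
  proof (cases "norm (x - z) = 0")
    case True then show ?thesis using cs G by simp
  next
    case False
    then have w: "norm (x - z) > 0" by simp
    have "(A + B) * norm (x - z) \<le> norm (g2 - g1)"
    proof -
      have "((A + B) * norm (x - z)) * norm (x - z) \<le> norm (g2 - g1) * norm (x - z)"
        using e cs by (simp add: power2_eq_square mult.assoc)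
      then show ?thesis using w by (rule mult_right_le_imp_le)
    qed
    then have "norm (x - z) \<le> norm (g2 - g1) / (A + B)" using G by (simp add: field_simps)
    then have "norm (g2 - g1) * norm (x - z) \<le> norm (g2 - g1) * (norm (g2 - g1) / (A + B))"
      by (rule mult_left_mono) simp
    then show ?thesis using cs by (simp add: power2_eq_square)
  qed
qed

lemma sum_telescope_1:
  fixes f :: "nat \<Rightarrow> real"
  shows "(\<Sum>t\<in>{1..T}. f (t - 1) - f t) = f 0 - f T"
  by (induction T) (simp_all add: sum.cl_ivl_Suc)

lemma amgm_key:
  fixes \<beta> \<gamma>0 \<eta> D S :: real
  assumes b: "\<beta> > 0" and g: "\<gamma>0 > 0" and e: "\<eta> > 0" and S: "S \<ge> 0"
  shows "D\<^sup>2 / 2 * (sqrt S / \<eta>) \<le> 1 / (2 * \<gamma>0) * D ^ 4 / \<eta>\<^sup>2 * \<beta>\<^sup>2 + \<gamma>0 / (8 * \<beta>\<^sup>2) * S"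
proof -
  define r where "r = sqrt S"
  have S': "S = r\<^sup>2" using S by (simp add: r_def)
  have r0: "r \<ge> 0" using S by (simp add: r_def)
  have "1 / (2 * \<gamma>0) * D ^ 4 / \<eta>\<^sup>2 * \<beta>\<^sup>2 + \<gamma>0 / (8 * \<beta>\<^sup>2) * S - D\<^sup>2 / 2 * (sqrt S / \<eta>)
      = 1 / (2 * \<gamma>0) * (D\<^sup>2 * \<beta> / \<eta> - \<gamma>0 * r / (2 * \<beta>))\<^sup>2"
    unfolding S' using b g e r0
    by (simp add: r_def[symmetric] field_simps power2_eq_square) (simp add: algebra_simps power4_eq_xxxx)
  moreover have "0 \<le> 1 / (2 * \<gamma>0) * (D\<^sup>2 * \<beta> / \<eta> - \<gamma>0 * r / (2 * \<beta>))\<^sup>2" using g by simp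
  ultimately show ?thesis by linarith
qed

theorem lemmaC14:
  fixes X :: "'a::euclidean_space set" and F :: "'a \<Rightarrow> 'a"
    and \<beta> \<gamma>0 \<eta> D :: real and T :: nat and x z :: "nat \<Rightarrow> 'a"
  assumes X_ne: "X \<noteq> {}" and X_closed: "closed X" and X_convex: "convex X"
    and mono: "monotone_op X F" and smooth: "smooth_op X \<beta> F" and beta_nn: "0 \<le> \<beta>"
    and g0: "\<gamma>0 > 0" and eta: "\<eta> > 0" and D: "D > 0" and T: "T \<ge> 1"
    and x0: "x 0 \<in> X" and z0: "z 0 = x 0"
    and x_step: "\<And>t. 1 \<le> t \<Longrightarrow> t \<le> T \<Longrightarrow>
       is_argmin_on X (prox_obj (F (x (t - 1))) (gam \<eta> \<gamma>0 F x (int t - 2)) (z (t - 1))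
          (gam \<eta> \<gamma>0 F x (int t - 1) - gam \<eta> \<gamma>0 F x (int t - 2)) (x 0)) (x t)"
    and z_step: "\<And>t. 1 \<le> t \<Longrightarrow> t \<le> T \<Longrightarrow>
       is_argmin_on X (prox_obj (F (x t)) (gam \<eta> \<gamma>0 F x (int t - 2)) (z (t - 1))
          (gam \<eta> \<gamma>0 F x (int t - 1) - gam \<eta> \<gamma>0 F x (int t - 2)) (x 0)) (z t)"
  defines "\<tau> \<equiv> Max {t\<in>{1..T}. gam \<eta> \<gamma>0 F x (int t - 2) \<le> 2 * sqrt 2 * \<beta>}"
  shows "Err X F (x 0) D ((1 / real T) *\<^sub>R (\<Sum>t\<in>{1..T}. x t))
     \<le> (1 / real T) * ( 1 / (2 * \<gamma>0) * D ^ 4 / \<eta>\<^sup>2 * \<beta>\<^sup>2 + \<gamma>0 / 2 * D\<^sup>2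
          + 8 / \<gamma>0 * \<beta>\<^sup>2 * \<eta>\<^sup>2
          + 1 / \<gamma>0 * (norm (F (x \<tau>) - F (x (\<tau> - 1))))\<^sup>2
          + 1 / \<gamma>0 * (norm (F (x (\<tau> - 1)) - F (x (\<tau> - 2))))\<^sup>2)"
proof -
  define \<Gamma> where "\<Gamma> t = gam \<eta> \<gamma>0 F x (int t - 1)" for t :: nat
  define dd where "dd s = (norm (F (x s) - F (x (s - 1))))\<^sup>2" for s :: nat
  have Gam0: "\<Gamma> 0 = 0" by (simp add: \<Gamma>_def gam_def)
  have GamS: "\<Gamma> t = sqrt (\<eta>\<^sup>2 * \<gamma>0\<^sup>2 + (\<Sum>s\<in>{1..t - 1}. dd s)) / \<eta>" if "t \<ge> 1" for t
  proof -
    have "nat (int t - 1) = t - 1" using that by simp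
    then show ?thesis using that by (simp add: \<Gamma>_def gam_def dd_def)
  qed
  have gam2: "gam \<eta> \<gamma>0 F x (int t - 2) = \<Gamma> (t - 1)" if "t \<ge> 1" for t
  proof -
    have "int (t - 1) - 1 = int t - 2" using that by simp
    then show ?thesis by (simp add: \<Gamma>_def)
  qed
  have gam1: "gam \<eta> \<gamma>0 F x (int t - 1) = \<Gamma> t" for t by (simp add: \<Gamma>_def)
  have dd0: "dd 0 = 0" by (simp add: dd_def)
  have dd_nn: "dd s \<ge> 0" for s by (simp add: dd_def)
  have Gam1: "\<Gamma> 1 = \<gamma>0" using GamS[of 1] eta g0 by (simp add: real_sqrt_mult)
  have Gam_ge: "\<Gamma> t \<ge> \<gamma>0" if "t \<ge> 1" for t
  proof -
    have "\<eta> * \<gamma>0 = sqrt (\<eta>\<^sup>2 * \<gamma>0\<^sup>2)" using eta g0 by (simp add: real_sqrt_mult)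
    also have "\<dots> \<le> sqrt (\<eta>\<^sup>2 * \<gamma>0\<^sup>2 + (\<Sum>s\<in>{1..t - 1}. dd s))"
      using dd_nn by (simp add: sum_nonneg)
    finally have "\<eta> * \<gamma>0 \<le> \<eta> * \<Gamma> t" using GamS[OF that] eta by (simp add: field_simps)
    then show ?thesis using eta by simp
  qed
  have Gam_Suc: "\<Gamma> t \<le> \<Gamma> (Suc t)" for t
  proof (cases "t = 0")
    case True then show ?thesis using Gam0 Gam1 g0 by simp
  next
    case False
    have "(\<Sum>s\<in>{1..t - 1}. dd s) \<le> (\<Sum>s\<in>{1..Suc t - 1}. dd s)"
      using dd_nn by (intro sum_mono2) auto
    then have "sqrt (\<eta>\<^sup>2 * \<gamma>0\<^sup>2 + (\<Sum>s\<in>{1..t - 1}. dd s)) \<le> sqrt (\<eta>\<^sup>2 * \<gamma>0\<^sup>2 + (\<Sum>s\<in>{1..Suc t - 1}. dd s))"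
      by simp
    then show ?thesis using GamS[of t] GamS[of "Suc t"] False eta by (simp add: divide_right_mono)
  qed
  have Gam_mono: "\<Gamma> s \<le> \<Gamma> t" if "s \<le> t" for s t
    using lift_Suc_mono_le[of \<Gamma>, OF Gam_Suc that] .
  have Gam_pos: "\<Gamma> t > 0" if "t \<ge> 1" for t using Gam_ge[OF that] g0 by linarith
  have xX: "x t \<in> X" if "t \<le> T" for t
    using x0 x_step[of t] that by (cases "t = 0") (auto simp: is_argmin_on_def)
  have zX: "z t \<in> X" if "t \<le> T" for t
    using x0 z0 z_step[of t] that by (cases "t = 0") (auto simp: is_argmin_on_def)
  have key: "(\<Sum>t\<in>{1..T}. inner (F (x t)) (x t - y)) \<le> \<Gamma> T * (D\<^sup>2 / 2) + (\<Sum>t\<in>{1..T}. dd t / \<Gamma> t)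
      - \<gamma>0 / 2 * (norm (x 1 - x 0))\<^sup>2
      - ((\<Sum>t\<in>{1..T}. \<Gamma> t / 2 * (norm (z t - x t))\<^sup>2) + (\<Sum>t\<in>{1..T}. \<Gamma> (t - 1) / 2 * (norm (x t - z (t - 1)))\<^sup>2))"
    if y: "y \<in> X" "norm (y - x 0) \<le> D" for y
  proof -
    define \<Phi> where "\<Phi> t = \<Gamma> t / 2 * (norm (y - z t))\<^sup>2" for t
    define B where "B t = \<Gamma> t - \<Gamma> (t - 1)" for t
    have step: "inner (F (x t)) (x t - y) \<le> (\<Phi> (t - 1) - \<Phi> t) + B t * (D\<^sup>2 / 2) + dd t / \<Gamma> t
        - \<Gamma> t / 2 * (norm (z t - x t))\<^sup>2 - \<Gamma> (t - 1) / 2 * (norm (x t - z (t - 1)))\<^sup>2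
        - B t / 2 * (norm (x t - x 0))\<^sup>2" if t: "t \<in> {1..T}" for t
    proof -
      have t1: "1 \<le> t" "t \<le> T" using t by auto
      have AB: "\<Gamma> (t - 1) + (\<Gamma> t - \<Gamma> (t - 1)) = \<Gamma> t" by simp
      have ABnn: "\<Gamma> (t - 1) + (\<Gamma> t - \<Gamma> (t - 1)) \<ge> 0" using Gam_pos[OF t1(1)] by simp
      have ABp: "\<Gamma> (t - 1) + (\<Gamma> t - \<Gamma> (t - 1)) > 0" using Gam_pos[OF t1(1)] by simp
      have amx: "is_argmin_on X (prox_obj (F (x (t - 1))) (\<Gamma> (t - 1)) (z (t - 1)) (\<Gamma> t - \<Gamma> (t - 1)) (x 0)) (x t)"
        using x_step[OF t1] gam2[OF t1(1)] gam1[of t] by simp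
      have amz: "is_argmin_on X (prox_obj (F (x t)) (\<Gamma> (t - 1)) (z (t - 1)) (\<Gamma> t - \<Gamma> (t - 1)) (x 0)) (z t)"
        using z_step[OF t1] gam2[OF t1(1)] gam1[of t] by simp
      have hx: "0 \<le> inner (F (x (t - 1)) + \<Gamma> (t - 1) *\<^sub>R (x t - z (t - 1)) + (\<Gamma> t - \<Gamma> (t - 1)) *\<^sub>R (x t - x 0)) (z t - x t)"
        by (rule prox_foc[OF X_convex amx zX[OF t1(2)] ABnn])
      have hz: "0 \<le> inner (F (x t) + \<Gamma> (t - 1) *\<^sub>R (z t - z (t - 1)) + (\<Gamma> t - \<Gamma> (t - 1)) *\<^sub>R (z t - x 0)) (y - z t)"
        by (rule prox_foc[OF X_convex amz y(1) ABnn])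
      have hz2: "0 \<le> inner (F (x t) + \<Gamma> (t - 1) *\<^sub>R (z t - z (t - 1)) + (\<Gamma> t - \<Gamma> (t - 1)) *\<^sub>R (z t - x 0)) (x t - z t)"
        by (rule prox_foc[OF X_convex amz xX[OF t1(2)] ABnn])
      have si: "inner (F (x t)) (x t - y) \<le> \<Gamma> (t - 1) / 2 * (norm (y - z (t - 1)))\<^sup>2 - \<Gamma> t / 2 * (norm (y - z t))\<^sup>2
         + (\<Gamma> t - \<Gamma> (t - 1)) / 2 * (norm (y - x 0))\<^sup>2 - \<Gamma> t / 2 * (norm (z t - x t))\<^sup>2 - \<Gamma> (t - 1) / 2 * (norm (x t - z (t - 1)))\<^sup>2
         - (\<Gamma> t - \<Gamma> (t - 1)) / 2 * (norm (x t - x 0))\<^sup>2 + inner (F (x t) - F (x (t - 1))) (x t - z t)"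
        using step_ineq[OF hx hz] unfolding AB .
      have pl: "inner (F (x t) - F (x (t - 1))) (x t - z t) \<le> dd t / \<Gamma> t"
        using prox_lip[OF hx hz2 ABp] unfolding AB by (simp add: dd_def)
      have B0: "B t \<ge> 0" using Gam_mono[of "t - 1" t] by (simp add: B_def)
      have "(norm (y - x 0))\<^sup>2 \<le> D\<^sup>2" using y(2) by (simp add: power_mono)
      then have yD: "B t / 2 * (norm (y - x 0))\<^sup>2 \<le> B t * (D\<^sup>2 / 2)" using B0
        by (simp add: mult_left_mono)
      show ?thesis using si pl yD unfolding \<Phi>_def B_def by linarith
    qed
    have "(\<Sum>t\<in>{1..T}. inner (F (x t)) (x t - y)) \<le> (\<Sum>t\<in>{1..T}. (\<Phi> (t - 1) - \<Phi> t) + B t * (D\<^sup>2 / 2) + dd t / \<Gamma> t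
        - \<Gamma> t / 2 * (norm (z t - x t))\<^sup>2 - \<Gamma> (t - 1) / 2 * (norm (x t - z (t - 1)))\<^sup>2
        - B t / 2 * (norm (x t - x 0))\<^sup>2)"
      by (rule sum_mono) (rule step)
    also have "\<dots> = (\<Sum>t\<in>{1..T}. \<Phi> (t - 1) - \<Phi> t) + (\<Sum>t\<in>{1..T}. B t) * (D\<^sup>2 / 2) + (\<Sum>t\<in>{1..T}. dd t / \<Gamma> t)
        - (\<Sum>t\<in>{1..T}. \<Gamma> t / 2 * (norm (z t - x t))\<^sup>2) - (\<Sum>t\<in>{1..T}. \<Gamma> (t - 1) / 2 * (norm (x t - z (t - 1)))\<^sup>2)
        - (\<Sum>t\<in>{1..T}. B t / 2 * (norm (x t - x 0))\<^sup>2)"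
      by (simp only: sum.distrib sum_subtractf sum_distrib_right)
    also have "(\<Sum>t\<in>{1..T}. \<Phi> (t - 1) - \<Phi> t) = \<Phi> 0 - \<Phi> T" by (rule sum_telescope_1)
    also have "(\<Sum>t\<in>{1..T}. B t) = \<Gamma> T"
    proof -
      have "(\<Sum>t\<in>{1..T}. B t) = - (\<Sum>t\<in>{1..T}. \<Gamma> (t - 1) - \<Gamma> t)"
        unfolding B_def by (simp add: sum_negf[symmetric])
      also have "\<dots> = \<Gamma> T" using sum_telescope_1[of \<Gamma> T] Gam0 by simp
      finally show ?thesis .
    qed
    also have "\<Phi> 0 = 0" by (simp add: \<Phi>_def Gam0)
    finally have A: "(\<Sum>t\<in>{1..T}. inner (F (x t)) (x t - y)) \<le> - \<Phi> T + \<Gamma> T * (D\<^sup>2 / 2) + (\<Sum>t\<in>{1..T}. dd t / \<Gamma> t)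
        - (\<Sum>t\<in>{1..T}. \<Gamma> t / 2 * (norm (z t - x t))\<^sup>2) - (\<Sum>t\<in>{1..T}. \<Gamma> (t - 1) / 2 * (norm (x t - z (t - 1)))\<^sup>2)
        - (\<Sum>t\<in>{1..T}. B t / 2 * (norm (x t - x 0))\<^sup>2)" by simp
    have PhiT: "\<Phi> T \<ge> 0" using Gam_pos[OF T] by (simp add: \<Phi>_def)
    have "B 1 / 2 * (norm (x 1 - x 0))\<^sup>2 \<le> (\<Sum>t\<in>{1..T}. B t / 2 * (norm (x t - x 0))\<^sup>2)"
    proof (rule member_le_sum)
      show "1 \<in> {1..T}" using T by simp
      fix t assume "t \<in> {1..T} - {1}"
      then have "B t \<ge> 0" using Gam_mono[of "t - 1" t] by (simp add: B_def)
      then show "0 \<le> B t / 2 * (norm (x t - x 0))\<^sup>2" by simp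
    qed simp
    moreover have "B 1 = \<gamma>0" using Gam1 Gam0 by (simp add: B_def)
    ultimately show ?thesis using A PhiT by simp
  qed
  define R where "R = 1 / (2 * \<gamma>0) * D ^ 4 / \<eta>\<^sup>2 * \<beta>\<^sup>2 + \<gamma>0 / 2 * D\<^sup>2
          + 8 / \<gamma>0 * \<beta>\<^sup>2 * \<eta>\<^sup>2 + 1 / \<gamma>0 * dd \<tau> + 1 / \<gamma>0 * dd (\<tau> - 1)"
  define S\<tau> where "S\<tau> = {t\<in>{1..T}. gam \<eta> \<gamma>0 F x (int t - 2) \<le> 2 * sqrt 2 * \<beta>}"
  have fin: "finite S\<tau>" by (simp add: S\<tau>_def)
  have oneS: "1 \<in> S\<tau>" using T beta_nn by (simp add: S\<tau>_def gam_def)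
  have tauS: "\<tau> \<in> S\<tau>" unfolding \<tau>_def S\<tau>_def[symmetric] using fin oneS by (intro Max_in) auto
  have tau1: "1 \<le> \<tau>" and tauT: "\<tau> \<le> T" using tauS by (auto simp: S\<tau>_def)
  have tau_le: "\<Gamma> (\<tau> - 1) \<le> 2 * sqrt 2 * \<beta>" using tauS gam2[OF tau1] by (simp add: S\<tau>_def)
  have tau_after: "\<Gamma> (t - 1) > 2 * sqrt 2 * \<beta>" if "\<tau> < t" "t \<le> T" for t
  proof (rule ccontr)
    assume "\<not> ?thesis"
    then have "t \<in> S\<tau>" using that tau1 gam2[of t] by (simp add: S\<tau>_def)
    then have "t \<le> \<tau>" unfolding \<tau>_def S\<tau>_def[symmetric] using fin by simp
    then show False using that by simp
  qed
  have ddle: "dd t \<le> \<beta>\<^sup>2 * (norm (x t - x (t - 1)))\<^sup>2" if "1 \<le> t" "t \<le> T" for t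
  proof -
    have "norm (F (x t) - F (x (t - 1))) \<le> \<beta> * norm (x t - x (t - 1))"
      using smooth xX[of t] xX[of "t - 1"] that unfolding smooth_op_def by simp
    then have "(norm (F (x t) - F (x (t - 1))))\<^sup>2 \<le> (\<beta> * norm (x t - x (t - 1)))\<^sup>2"
      by (simp add: power_mono)
    then show ?thesis by (simp add: dd_def power_mult_distrib)
  qed
  have W: "\<Gamma> T * (D\<^sup>2 / 2) + (\<Sum>t\<in>{1..T}. dd t / \<Gamma> t)
      - \<gamma>0 / 2 * (norm (x 1 - x 0))\<^sup>2
      - ((\<Sum>t\<in>{1..T}. \<Gamma> t / 2 * (norm (z t - x t))\<^sup>2) + (\<Sum>t\<in>{1..T}. \<Gamma> (t - 1) / 2 * (norm (x t - z (t - 1)))\<^sup>2))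
      \<le> R"
  proof (cases "\<beta> = 0")
    case True
    have dz: "dd t = 0" if "t \<in> {1..T}" for t using ddle[of t] that True dd_nn[of t] by auto
    have "(\<Sum>s\<in>{1..T - 1}. dd s) = 0" using dz by (intro sum.neutral) auto
    then have "\<Gamma> T = \<gamma>0" using GamS[OF T] eta g0 by (simp add: real_sqrt_mult)
    moreover have "(\<Sum>t\<in>{1..T}. dd t / \<Gamma> t) = 0" using dz by simp
    moreover have "0 \<le> (\<Sum>t\<in>{1..T}. \<Gamma> t / 2 * (norm (z t - x t))\<^sup>2)"
      using Gam_pos by (intro sum_nonneg) (simp add: less_imp_le)
    moreover have "0 \<le> (\<Sum>t\<in>{1..T}. \<Gamma> (t - 1) / 2 * (norm (x t - z (t - 1)))\<^sup>2)"
      using Gam_mono[of 0] Gam0 by (intro sum_nonneg) (metis divide_nonneg_nonneg mult_nonneg_nonneg zero_le_numeral zero_le_power2 le0)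
    moreover have "0 \<le> 1 / \<gamma>0 * dd \<tau> + 1 / \<gamma>0 * dd (\<tau> - 1)" using g0 dd_nn by simp
    moreover have "0 \<le> \<gamma>0 / 2 * (norm (x 1 - x 0))\<^sup>2" using g0 by simp
    moreover have "\<gamma>0 / 2 * D\<^sup>2 \<le> R" using g0 dd_nn unfolding R_def True by simp
    ultimately show ?thesis by (simp add: algebra_simps) 

  next
    case False
    then have bp: "\<beta> > 0" using beta_nn by simp
    define c where "c = \<gamma>0 / (8 * \<beta>\<^sup>2)"
    define S where "S = (\<Sum>t\<in>{1..T}. dd t)"
    have S0: "S \<ge> 0" using dd_nn by (simp add: S_def sum_nonneg)
    have GT: "\<Gamma> T \<le> \<gamma>0 + sqrt S / \<eta>"
    proof -
      have "(\<Sum>s\<in>{1..T - 1}. dd s) \<le> S" unfolding S_def using dd_nn by (intro sum_mono2) auto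
      then have "sqrt (\<eta>\<^sup>2 * \<gamma>0\<^sup>2 + (\<Sum>s\<in>{1..T - 1}. dd s)) \<le> sqrt (\<eta>\<^sup>2 * \<gamma>0\<^sup>2 + S)" by simp
      also have "\<dots> \<le> sqrt (\<eta>\<^sup>2 * \<gamma>0\<^sup>2) + sqrt S" using S0 by (intro sqrt_add_le_add_sqrt) auto
      also have "sqrt (\<eta>\<^sup>2 * \<gamma>0\<^sup>2) = \<eta> * \<gamma>0" using eta g0 by (simp add: real_sqrt_mult)
      finally have "sqrt (\<eta>\<^sup>2 * \<gamma>0\<^sup>2 + (\<Sum>s\<in>{1..T - 1}. dd s)) / \<eta> \<le> (\<eta> * \<gamma>0 + sqrt S) / \<eta>"
        using eta by (simp add: divide_right_mono)
      also have "\<dots> = \<gamma>0 + sqrt S / \<eta>" using eta by (simp add: field_simps)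
      finally show ?thesis using GamS[OF T] by simp
    qed
    have P1: "\<Gamma> T * (D\<^sup>2 / 2) \<le> \<gamma>0 / 2 * D\<^sup>2 + 1 / (2 * \<gamma>0) * D ^ 4 / \<eta>\<^sup>2 * \<beta>\<^sup>2 + c * S"
    proof -
      have "\<Gamma> T * (D\<^sup>2 / 2) \<le> (\<gamma>0 + sqrt S / \<eta>) * (D\<^sup>2 / 2)" using GT by (simp add: mult_right_mono)
      also have "\<dots> = \<gamma>0 / 2 * D\<^sup>2 + D\<^sup>2 / 2 * (sqrt S / \<eta>)" by (simp add: algebra_simps)
      also have "\<dots> \<le> \<gamma>0 / 2 * D\<^sup>2 + (1 / (2 * \<gamma>0) * D ^ 4 / \<eta>\<^sup>2 * \<beta>\<^sup>2 + \<gamma>0 / (8 * \<beta>\<^sup>2) * S)"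
        using amgm_key[OF bp g0 eta S0, of D] by simp
      finally show ?thesis by (simp add: c_def)
    qed
    have N1: "\<gamma>0 / (2 * \<beta>\<^sup>2) * dd 1 \<le> \<gamma>0 / 2 * (norm (x 1 - x 0))\<^sup>2"
    proof -
      have "dd 1 \<le> \<beta>\<^sup>2 * (norm (x 1 - x 0))\<^sup>2" using ddle[of 1] T by simp
      then have "dd 1 / \<beta>\<^sup>2 \<le> (norm (x 1 - x 0))\<^sup>2" using bp by (simp add: field_simps)
      then have "\<gamma>0 / 2 * (dd 1 / \<beta>\<^sup>2) \<le> \<gamma>0 / 2 * (norm (x 1 - x 0))\<^sup>2" using g0
        by (intro mult_left_mono) auto
      then show ?thesis by (simp add: field_simps)
    qed
    have N2: "(\<Sum>t\<in>{2..T}. \<Gamma> (t - 1) / (4 * \<beta>\<^sup>2) * dd t) \<le>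
        (\<Sum>t\<in>{1..T}. \<Gamma> t / 2 * (norm (z t - x t))\<^sup>2) + (\<Sum>t\<in>{1..T}. \<Gamma> (t - 1) / 2 * (norm (x t - z (t - 1)))\<^sup>2)"
    proof -
      have Gnn: "\<Gamma> t \<ge> 0" for t using Gam_mono[of 0 t] Gam0 by simp
      obtain m where m: "T = Suc m" using T by (cases T) auto
      have "(\<Sum>t\<in>{2..T}. \<Gamma> (t - 1) / 2 * (norm (z (t - 1) - x (t - 1)))\<^sup>2)
          = (\<Sum>t\<in>{1..m}. \<Gamma> t / 2 * (norm (z t - x t))\<^sup>2)"
        unfolding m using sum.shift_bounds_cl_Suc_ivl[of "\<lambda>t. \<Gamma> (t - 1) / 2 * (norm (z (t - 1) - x (t - 1)))\<^sup>2" 1 m]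
        by (simp add: numeral_2_eq_2)
      also have "\<dots> \<le> (\<Sum>t\<in>{1..T}. \<Gamma> t / 2 * (norm (z t - x t))\<^sup>2)"
        using Gnn unfolding m by (intro sum_mono2) auto
      finally have r1: "(\<Sum>t\<in>{2..T}. \<Gamma> (t - 1) / 2 * (norm (z (t - 1) - x (t - 1)))\<^sup>2)
          \<le> (\<Sum>t\<in>{1..T}. \<Gamma> t / 2 * (norm (z t - x t))\<^sup>2)" .
      have r2: "(\<Sum>t\<in>{2..T}. \<Gamma> (t - 1) / 2 * (norm (x t - z (t - 1)))\<^sup>2)
          \<le> (\<Sum>t\<in>{1..T}. \<Gamma> (t - 1) / 2 * (norm (x t - z (t - 1)))\<^sup>2)"
        using Gnn by (intro sum_mono2) auto
      have r3: "(\<Sum>t\<in>{2..T}. \<Gamma> (t - 1) / (4 * \<beta>\<^sup>2) * dd t) \<le>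
          (\<Sum>t\<in>{2..T}. \<Gamma> (t - 1) / 2 * (norm (z (t - 1) - x (t - 1)))\<^sup>2 + \<Gamma> (t - 1) / 2 * (norm (x t - z (t - 1)))\<^sup>2)"
      proof (rule sum_mono)
        fix t assume t: "t \<in> {2..T}"
        let ?a = "x t - z (t - 1)" and ?b = "z (t - 1) - x (t - 1)"
        have "x t - x (t - 1) = ?a + ?b" by simp
        then have "(norm (x t - x (t - 1)))\<^sup>2 \<le> (norm ?a + norm ?b)\<^sup>2"
          by (metis norm_ge_zero norm_triangle_ineq power_mono)
        also have "\<dots> \<le> 2 * (norm ?a)\<^sup>2 + 2 * (norm ?b)\<^sup>2"
        proof -
          have "0 \<le> (norm ?a - norm ?b)\<^sup>2" by simp
          then show ?thesis unfolding power2_sum power2_diff by linarith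
        qed
        finally have pa: "(norm (x t - x (t - 1)))\<^sup>2 \<le> 2 * (norm ?a)\<^sup>2 + 2 * (norm ?b)\<^sup>2" .
        have "dd t \<le> \<beta>\<^sup>2 * (norm (x t - x (t - 1)))\<^sup>2" using ddle[of t] t by simp
        then have "dd t / (4 * \<beta>\<^sup>2) \<le> (norm (x t - x (t - 1)))\<^sup>2 / 4" using bp by (simp add: field_simps)
        also have "\<dots> \<le> (norm ?b)\<^sup>2 / 2 + (norm ?a)\<^sup>2 / 2" using pa by simp
        finally have fin1: "dd t / (4 * \<beta>\<^sup>2) \<le> (norm ?b)\<^sup>2 / 2 + (norm ?a)\<^sup>2 / 2" .
        have "\<Gamma> (t - 1) * (dd t / (4 * \<beta>\<^sup>2)) \<le> \<Gamma> (t - 1) * ((norm ?b)\<^sup>2 / 2 + (norm ?a)\<^sup>2 / 2)"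
          by (rule mult_left_mono[OF fin1 Gnn])
        then show "\<Gamma> (t - 1) / (4 * \<beta>\<^sup>2) * dd t \<le> \<Gamma> (t - 1) / 2 * (norm ?b)\<^sup>2 + \<Gamma> (t - 1) / 2 * (norm ?a)\<^sup>2"
          by (simp add: algebra_simps)
      qed
      show ?thesis using r1 r2 r3 by (simp add: sum.distrib)
    qed
    define n where "n t = (if t = 1 then \<gamma>0 / (2 * \<beta>\<^sup>2) else \<Gamma> (t - 1) / (4 * \<beta>\<^sup>2))" for t
    define e where "e t = dd t / \<Gamma> t + c * dd t - n t * dd t" for t
    have sN2: "(\<Sum>t\<in>{2..T}. n t * dd t) = (\<Sum>t\<in>{2..T}. \<Gamma> (t - 1) / (4 * \<beta>\<^sup>2) * dd t)"
      by (rule sum.cong) (auto simp: n_def)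
    have sN1: "(\<Sum>t\<in>{1..T}. n t * dd t) = n 1 * dd 1 + (\<Sum>t\<in>{2..T}. n t * dd t)"
      using sum.atLeast_Suc_atMost[OF T, of "\<lambda>t. n t * dd t"] by (simp add: numeral_2_eq_2)
    have sumN: "(\<Sum>t\<in>{1..T}. n t * dd t) = \<gamma>0 / (2 * \<beta>\<^sup>2) * dd 1 + (\<Sum>t\<in>{2..T}. \<Gamma> (t - 1) / (4 * \<beta>\<^sup>2) * dd t)"
      using sN1 sN2 by (simp add: n_def)
    have sumE: "(\<Sum>t\<in>{1..T}. e t) = (\<Sum>t\<in>{1..T}. dd t / \<Gamma> t) + c * S - (\<Sum>t\<in>{1..T}. n t * dd t)"
      by (simp add: e_def S_def sum.distrib sum_subtractf sum_distrib_left)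
    have E_after: "e t \<le> 0" if t: "\<tau> < t" "t \<le> T" for t
    proof -
      define g where "g = \<Gamma> (t - 1)"
      have gb: "g > 2 * sqrt 2 * \<beta>" using tau_after[OF t] by (simp add: g_def)
      have t2: "t \<ge> 2" using t tau1 by simp
      have gg0: "g \<ge> \<gamma>0" using Gam_ge[of "t - 1"] t2 by (simp add: g_def)
      have gpos: "g > 0" using gg0 g0 by simp
      have gGt: "g \<le> \<Gamma> t" using Gam_mono[of "t - 1" t] by (simp add: g_def)
      have nt: "n t = g / (4 * \<beta>\<^sup>2)" using t2 by (simp add: n_def g_def)
      have sq: "8 * \<beta>\<^sup>2 \<le> g\<^sup>2"
      proof -
        have "(2 * sqrt 2 * \<beta>)\<^sup>2 \<le> g\<^sup>2" using gb bp by (intro power_mono) auto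
        then show ?thesis by (simp add: power_mult_distrib)
      qed
      have i1: "1 / \<Gamma> t \<le> 1 / g" using gGt gpos by (simp add: frac_le)
      have i2: "1 / g \<le> g / (8 * \<beta>\<^sup>2)" using sq gpos bp by (simp add: field_simps power2_eq_square)
      have i3: "c \<le> g / (8 * \<beta>\<^sup>2)" using gg0 bp by (simp add: c_def divide_right_mono)
      have "1 / \<Gamma> t + c - n t \<le> 0" using i1 i2 i3 nt by (simp add: field_simps)
      then have "dd t * (1 / \<Gamma> t + c - n t) \<le> 0" using dd_nn[of t] by (simp add: mult_nonneg_nonpos)
      then show ?thesis by (simp add: e_def algebra_simps)
    qed
    have E_before: "e t \<le> dd t / \<gamma>0" if t: "1 \<le> t" "t \<le> \<tau>" for t
    proof -
      have nc: "c \<le> n t"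
      proof (cases "t = 1")
        case True then show ?thesis using bp g0 by (simp add: n_def c_def field_simps)
      next
        case False
        then have "\<Gamma> (t - 1) \<ge> \<gamma>0" using Gam_ge[of "t - 1"] t by simp
        then have "\<gamma>0 / (8 * \<beta>\<^sup>2) \<le> \<Gamma> (t - 1) / (4 * \<beta>\<^sup>2)" using bp g0 by (simp add: field_simps)
        then show ?thesis using False by (simp add: n_def c_def)
      qed
      have "dd t * (c - n t) \<le> 0" using nc dd_nn[of t] by (simp add: mult_nonneg_nonpos)
      moreover have "dd t / \<Gamma> t \<le> dd t / \<gamma>0" using Gam_ge[OF t(1)] g0 dd_nn[of t]
        by (simp add: divide_left_mono)
      ultimately show ?thesis by (simp add: e_def algebra_simps)
    qed
    have sum_tau: "(\<Sum>t\<in>{1..\<tau>}. dd t) \<le> 8 * \<beta>\<^sup>2 * \<eta>\<^sup>2 + dd \<tau> + dd (\<tau> - 1)"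
    proof (cases "\<tau> = 1")
      case True then show ?thesis using dd0 by simp
    next
      case False
      define m where "m = \<tau> - 2"
      have m: "\<tau> = Suc (Suc m)" using False tau1 by (simp add: m_def)
      have sn: "0 \<le> (\<Sum>s\<in>{1..m}. dd s)" using dd_nn by (simp add: sum_nonneg)
      have "sqrt (\<eta>\<^sup>2 * \<gamma>0\<^sup>2 + (\<Sum>s\<in>{1..m}. dd s)) / \<eta> \<le> 2 * sqrt 2 * \<beta>"
        using tau_le GamS[of "Suc m"] m by simp
      then have "sqrt (\<eta>\<^sup>2 * \<gamma>0\<^sup>2 + (\<Sum>s\<in>{1..m}. dd s)) \<le> 2 * sqrt 2 * \<beta> * \<eta>"
        using eta by (simp add: field_simps)
      then have "(sqrt (\<eta>\<^sup>2 * \<gamma>0\<^sup>2 + (\<Sum>s\<in>{1..m}. dd s)))\<^sup>2 \<le> (2 * sqrt 2 * \<beta> * \<eta>)\<^sup>2"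
      proof (rule power_mono)
        show "0 \<le> sqrt (\<eta>\<^sup>2 * \<gamma>0\<^sup>2 + (\<Sum>s\<in>{1..m}. dd s))" using sn by simp
      qed
      moreover have "(sqrt (\<eta>\<^sup>2 * \<gamma>0\<^sup>2 + (\<Sum>s\<in>{1..m}. dd s)))\<^sup>2 = \<eta>\<^sup>2 * \<gamma>0\<^sup>2 + (\<Sum>s\<in>{1..m}. dd s)"
        using sn by simp
      moreover have "(2 * sqrt 2 * \<beta> * \<eta>)\<^sup>2 = 8 * \<beta>\<^sup>2 * \<eta>\<^sup>2" by (simp add: power_mult_distrib)
      moreover have "0 \<le> \<eta>\<^sup>2 * \<gamma>0\<^sup>2" by simp
      ultimately have "(\<Sum>s\<in>{1..m}. dd s) \<le> 8 * \<beta>\<^sup>2 * \<eta>\<^sup>2" by linarith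
      moreover have "(\<Sum>t\<in>{1..\<tau>}. dd t) = (\<Sum>s\<in>{1..m}. dd s) + dd (Suc m) + dd (Suc (Suc m))"
        unfolding m by (simp add: sum.cl_ivl_Suc)
      ultimately show ?thesis using m by simp
    qed
    have E2: "(\<Sum>t\<in>{1..T}. e t) \<le> 8 / \<gamma>0 * \<beta>\<^sup>2 * \<eta>\<^sup>2 + 1 / \<gamma>0 * dd \<tau> + 1 / \<gamma>0 * dd (\<tau> - 1)"
    proof -
      have split: "{1..T} = {1..\<tau>} \<union> {Suc \<tau>..T}" using tauT by auto
      have "(\<Sum>t\<in>{1..T}. e t) = (\<Sum>t\<in>{1..\<tau>}. e t) + (\<Sum>t\<in>{Suc \<tau>..T}. e t)"
        unfolding split by (rule sum.union_disjoint) auto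
      also have "(\<Sum>t\<in>{Suc \<tau>..T}. e t) \<le> 0" using E_after by (intro sum_nonpos) auto
      also have "(\<Sum>t\<in>{1..\<tau>}. e t) \<le> (\<Sum>t\<in>{1..\<tau>}. dd t / \<gamma>0)" using E_before by (intro sum_mono) auto
      also have "\<dots> = (\<Sum>t\<in>{1..\<tau>}. dd t) / \<gamma>0" by (simp add: sum_divide_distrib)
      also have "\<dots> \<le> (8 * \<beta>\<^sup>2 * \<eta>\<^sup>2 + dd \<tau> + dd (\<tau> - 1)) / \<gamma>0" using sum_tau g0 by (simp add: divide_right_mono)
      also have "\<dots> = 8 / \<gamma>0 * \<beta>\<^sup>2 * \<eta>\<^sup>2 + 1 / \<gamma>0 * dd \<tau> + 1 / \<gamma>0 * dd (\<tau> - 1)"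
        by (simp add: add_divide_distrib)
      finally show ?thesis by simp
    qed
    show ?thesis using P1 N1 N2 sumN sumE E2 unfolding R_def by linarith
  qed
  have bound_y: "inner (F y) ((1 / real T) *\<^sub>R (\<Sum>t\<in>{1..T}. x t) - y) \<le> (1 / real T) * R"
    if y: "y \<in> X" "norm (y - x 0) \<le> D" for y
  proof -
    have Tp: "real T > 0" using T by simp
    have "(\<Sum>t\<in>{1..T}. x t - y) = (\<Sum>t\<in>{1..T}. x t) - real T *\<^sub>R y"
      by (simp add: sum_subtractf sum_constant_scaleR)
    then have eq: "(1 / real T) *\<^sub>R (\<Sum>t\<in>{1..T}. x t) - y = (1 / real T) *\<^sub>R (\<Sum>t\<in>{1..T}. x t - y)"
      using Tp by (simp add: scaleR_diff_right)
    have "inner (F y) ((1 / real T) *\<^sub>R (\<Sum>t\<in>{1..T}. x t) - y) = (1 / real T) * (\<Sum>t\<in>{1..T}. inner (F y) (x t - y))"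
      unfolding eq by (simp add: inner_sum_right)
    also have "\<dots> \<le> (1 / real T) * (\<Sum>t\<in>{1..T}. inner (F (x t)) (x t - y))"
    proof (rule mult_left_mono)
      show "(\<Sum>t\<in>{1..T}. inner (F y) (x t - y)) \<le> (\<Sum>t\<in>{1..T}. inner (F (x t)) (x t - y))"
      proof (rule sum_mono)
        fix t assume "t \<in> {1..T}"
        then have "0 \<le> inner (F (x t) - F y) (x t - y)" using mono xX[of t] y(1) unfolding monotone_op_def by auto
        then show "inner (F y) (x t - y) \<le> inner (F (x t)) (x t - y)" by (simp add: inner_diff_left)
      qed
    qed simp
    also have "\<dots> \<le> (1 / real T) * R"
    proof (rule mult_left_mono)
      have k: "(\<Sum>t\<in>{1..T}. inner (F (x t)) (x t - y)) \<le> \<Gamma> T * (D\<^sup>2 / 2) + (\<Sum>t\<in>{1..T}. dd t / \<Gamma> t)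
      - \<gamma>0 / 2 * (norm (x 1 - x 0))\<^sup>2
      - ((\<Sum>t\<in>{1..T}. \<Gamma> t / 2 * (norm (z t - x t))\<^sup>2) + (\<Sum>t\<in>{1..T}. \<Gamma> (t - 1) / 2 * (norm (x t - z (t - 1)))\<^sup>2))"
        by (rule key[OF y])
      show "(\<Sum>t\<in>{1..T}. inner (F (x t)) (x t - y)) \<le> R" using order_trans[OF k W] .
    qed simp
    finally show ?thesis .
  qed
  have Req: "R = 1 / (2 * \<gamma>0) * D ^ 4 / \<eta>\<^sup>2 * \<beta>\<^sup>2 + \<gamma>0 / 2 * D\<^sup>2
          + 8 / \<gamma>0 * \<beta>\<^sup>2 * \<eta>\<^sup>2
          + 1 / \<gamma>0 * (norm (F (x \<tau>) - F (x (\<tau> - 1))))\<^sup>2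
          + 1 / \<gamma>0 * (norm (F (x (\<tau> - 1)) - F (x (\<tau> - 2))))\<^sup>2"
  proof -
    have "\<tau> - 1 - 1 = \<tau> - 2" by simp
    then show ?thesis by (simp add: R_def dd_def)
  qed
  have ne: "{y \<in> X. norm (y - x 0) \<le> D} \<noteq> {}" using x0 D by auto
  have "Err X F (x 0) D ((1 / real T) *\<^sub>R (\<Sum>t\<in>{1..T}. x t)) \<le> (1 / real T) * R"
    unfolding Err_def using bound_y by (intro cSUP_least[OF ne]) auto
  then show ?thesis unfolding Req .
qed

end
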